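(* Let $P$ be a polyhedral map and $O$ a c3-lsp-operation. The following are equivalent: (1) $O$ increases the symmetry of $P$, i.e. $|\mathrm{Aut}(B_{O(P)})|>|\mathrm{Aut}(B_P)|$; (2) there exists an automorphism of $B_{O(P)}$ that maps some chamber to a chamber in a different class; (3) there exists an automorphism of $B_{O(P)}$ that maps every chamber to a chamber in a different class.
   Context: A polyhedral map is a 3-connected graph embedded in a closed orientable surface such that every face is an open disc and the closures of any two faces have connected intersection. The barycentric subdivision $B_P$ of $P$ is obtained by adding a vertex inside every face and on every edge and joining each face-vertex to all vertices and edge-vertices on that face's boundary, so all faces are triangles (chambers); original vertices get colour 0, edge-vertices colour 1, face-vertices colour 2; $\mathrm{Aut}(B_P)$ is its group of colour-preserving automorphisms. An lsp-operation is a 2-connected plane map $O$ with vertex colouring $c:V\to\{0,1,2\}$ and a designated outer face containing three marked vertices $v_0,v_1,v_2$ such that: every inner face is a triangle (a chamber of $O$); no edge joins two vertices of the same colour; every colour-1 vertex not on the outer face has degree 4; every colour-1 vertex on the outer face other than $v_0,v_1,v_2$ has degree 3; $c(v_0)\neq1$, $c(v_2)\neq1$; and if $c(v_1)=1$ then $v_1$ has degree 2. Applying $O$ to $P$: into every chamber of $B_P$ glue a copy of $O$ or its mirror image (according to the orientation of the chamber, adjacent chambers receiving mirror-image copies), identifying $v_i$ with the colour-$i$ vertex of the chamber and the outer-face path of $O$ between $v_i$ and $v_j$ with the chamber edge between its colour-$i$ and colour-$j$ vertices; the result is the barycentric subdivision $B_{O(P)}$ of a map $O(P)$. $O$ is a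 c3-lsp-operation if $O(P)$ is polyhedral for all polyhedral $P$. Each chamber of $B_{O(P)}$ is a copy of a chamber $y$ of $O$; the class of $y$ is the set of all chambers of $B_{O(P)}$ that are copies of $y$. *)

theory Defs
  imports Main
begin

text \<open>Maps are encoded by their flag systems (= chamber systems of their barycentric
subdivisions): a finite set of chambers F and three involutions s 0, s 1, s 2,
where s i x is the chamber sharing with x the side opposite the colour-i vertex.\<close>

type_synonym 'f fsys = "nat \<Rightarrow> 'f \<Rightarrow> 'f"

definition step :: "'f set \<Rightarrow> 'f fsys \<Rightarrow> nat set \<Rightarrow> ('f \<times> 'f) set" where
  "step F s I = {(x, s i x) | x i. x \<in> F \<and> i \<in> I}"

definition orb :: "'f set \<Rightarrow> 'f fsys \<Rightarrow> nat set \<Rightarrow> 'f \<Rightarrow> 'f set" where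
  "orb F s I x = {y. (x, y) \<in> (step F s I)\<^sup>*}"

text \<open>A map on a closed surface (connected, every edge has four flags).\<close>
definition is_map :: "'f set \<Rightarrow> 'f fsys \<Rightarrow> bool" where
  "is_map F s \<longleftrightarrow> finite F \<and> F \<noteq> {} \<and>
     (\<forall>i<3. \<forall>x\<in>F. s i x \<in> F \<and> s i (s i x) = x \<and> s i x \<noteq> x) \<and>
     (\<forall>x\<in>F. s 0 (s 2 x) = s 2 (s 0 x) \<and> s 0 (s 2 x) \<noteq> x) \<and>
     (\<forall>x\<in>F. \<forall>y\<in>F. (x, y) \<in> (step F s {0,1,2})\<^sup>*)"

definition orientable :: "'f set \<Rightarrow> 'f fsys \<Rightarrow> bool" where
  "orientable F s \<longleftrightarrow> (\<exists>p :: 'f \<Rightarrow> bool. \<forall>x\<in>F. \<forall>i<3. p (s i x) \<noteq> p x)"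

definition vertices :: "'f set \<Rightarrow> 'f fsys \<Rightarrow> 'f set set" where
  "vertices F s = orb F s {1,2} ` F"

definition edges :: "'f set \<Rightarrow> 'f fsys \<Rightarrow> 'f set set" where
  "edges F s = orb F s {0,2} ` F"

definition faces :: "'f set \<Rightarrow> 'f fsys \<Rightarrow> 'f set set" where
  "faces F s = orb F s {0,1} ` F"

definition ends :: "'f set \<Rightarrow> 'f fsys \<Rightarrow> 'f set \<Rightarrow> 'f set set" where
  "ends F s e = {v \<in> vertices F s. v \<inter> e \<noteq> {}}"

text \<open>degree of a vertex (loops counted twice)\<close>
definition deg :: "'f set \<Rightarrow> nat" where
  "deg v = card v div 2"

text \<open>The subgraph with vertex set W and edge set Es is connected (the empty graph counts as connected).\<close>
definition sub_connected :: "'f set \<Rightarrow> 'f fsys \<Rightarrow> 'f set set \<Rightarrow> 'f set set \<Rightarrow> bool" where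
  "sub_connected F s W Es \<longleftrightarrow>
     (\<forall>u\<in>W. \<forall>w\<in>W. (u, w) \<in> {(a, b). a \<in> W \<and> b \<in> W \<and>
          (\<exists>e\<in>Es. a \<in> ends F s e \<and> b \<in> ends F s e)}\<^sup>*)"

definition k_connected :: "nat \<Rightarrow> 'f set \<Rightarrow> 'f fsys \<Rightarrow> bool" where
  "k_connected k F s \<longleftrightarrow> card (vertices F s) > k \<and>
     (\<forall>S \<subseteq> vertices F s. card S < k \<longrightarrow>
        sub_connected F s (vertices F s - S) {e \<in> edges F s. ends F s e \<inter> S = {}})"

definition simple_graph :: "'f set \<Rightarrow> 'f fsys \<Rightarrow> bool" where
  "simple_graph F s \<longleftrightarrow> (\<forall>e\<in>edges F s. card (ends F s e) = 2) \<and>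
     (\<forall>e\<in>edges F s. \<forall>e'\<in>edges F s. ends F s e = ends F s e' \<longrightarrow> e = e')"

definition face_vertices :: "'f set \<Rightarrow> 'f fsys \<Rightarrow> 'f set \<Rightarrow> 'f set set" where
  "face_vertices F s f = {v \<in> vertices F s. v \<inter> f \<noteq> {}}"

definition face_edges :: "'f set \<Rightarrow> 'f fsys \<Rightarrow> 'f set \<Rightarrow> 'f set set" where
  "face_edges F s f = {e \<in> edges F s. e \<inter> f \<noteq> {}}"

definition polyhedral :: "'f set \<Rightarrow> 'f fsys \<Rightarrow> bool" where
  "polyhedral F s \<longleftrightarrow> is_map F s \<and> orientable F s \<and> simple_graph F s \<and> k_connected 3 F s \<and>
     (\<forall>f\<in>faces F s. \<forall>g\<in>faces F s. f \<noteq> g \<longrightarrow>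
        sub_connected F s (face_vertices F s f \<inter> face_vertices F s g)
                          (face_edges F s f \<inter> face_edges F s g))"

text \<open>Colour-preserving automorphisms of the barycentric subdivision = automorphisms of the
chamber system (extended by the identity outside the carrier).\<close>
definition aut :: "'f set \<Rightarrow> 'f fsys \<Rightarrow> ('f \<Rightarrow> 'f) set" where
  "aut F s = {\<phi>. bij_betw \<phi> F F \<and> (\<forall>x. x \<notin> F \<longrightarrow> \<phi> x = x) \<and>
                 (\<forall>i<3. \<forall>x\<in>F. \<phi> (s i x) = s i (\<phi> x))}"

text \<open>Plane map: map on the sphere (orientable, Euler characteristic 2).\<close>
definition plane_map :: "'f set \<Rightarrow> 'f fsys \<Rightarrow> bool" where
  "plane_map F s \<longleftrightarrow> is_map F s \<and> orientable F s \<and>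
     int (card (vertices F s)) - int (card (edges F s)) + int (card (faces F s)) = 2"

definition lsp_operation :: "'o set \<Rightarrow> 'o fsys \<Rightarrow> ('o set \<Rightarrow> nat) \<Rightarrow> 'o set \<Rightarrow>
    'o set \<Rightarrow> 'o set \<Rightarrow> 'o set \<Rightarrow> bool" where
  "lsp_operation G t c outer v0 v1 v2 \<longleftrightarrow>
     plane_map G t \<and> k_connected 2 G t \<and>
     outer \<in> faces G t \<and>
     v0 \<in> vertices G t \<and> v1 \<in> vertices G t \<and> v2 \<in> vertices G t \<and>
     v0 \<noteq> v1 \<and> v1 \<noteq> v2 \<and> v0 \<noteq> v2 \<and>
     v0 \<inter> outer \<noteq> {} \<and> v1 \<inter> outer \<noteq> {} \<and> v2 \<inter> outer \<noteq> {} \<and>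
     (\<forall>v\<in>vertices G t. c v < 3) \<and>
     (\<forall>y\<in>faces G t - {outer}. card y = 6) \<and>
     (\<forall>e\<in>edges G t. card (ends G t e) = 2 \<and>
        (\<forall>a\<in>ends G t e. \<forall>b\<in>ends G t e. a \<noteq> b \<longrightarrow> c a \<noteq> c b)) \<and>
     (\<forall>v\<in>vertices G t. c v = 1 \<and> v \<inter> outer = {} \<longrightarrow> deg v = 4) \<and>
     (\<forall>v\<in>vertices G t. c v = 1 \<and> v \<inter> outer \<noteq> {} \<and> v \<notin> {v0, v1, v2} \<longrightarrow> deg v = 3) \<and>
     c v0 \<noteq> 1 \<and> c v2 \<noteq> 1 \<and> (c v1 = 1 \<longrightarrow> deg v1 = 2)"

text \<open>Chambers of O = inner faces.\<close>
definition op_chambers :: "'o set \<Rightarrow> 'o fsys \<Rightarrow> 'o set \<Rightarrow> 'o set set" where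
  "op_chambers G t outer = faces G t - {outer}"

text \<open>A flag of chamber y lying on the side of y opposite its colour-i vertex.\<close>
definition opp_flag :: "'o set \<Rightarrow> 'o fsys \<Rightarrow> ('o set \<Rightarrow> nat) \<Rightarrow> 'o set \<Rightarrow> nat \<Rightarrow> 'o" where
  "opp_flag G t c y i = (SOME x. x \<in> y \<and> (\<forall>w\<in>ends G t (orb G t {0,2} x). c w \<noteq> i))"

text \<open>Walking along the outer face without passing through a marked vertex: the components
are the three outer paths between the marked vertices.\<close>
definition bstep :: "'o set \<Rightarrow> 'o fsys \<Rightarrow> 'o set \<Rightarrow> 'o set \<Rightarrow> 'o set \<Rightarrow> 'o set \<Rightarrow> ('o \<times> 'o) set" where
  "bstep G t outer v0 v1 v2 =
     {(x, t 0 x) | x. x \<in> outer} \<union>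
     {(x, t 1 x) | x. x \<in> outer \<and> orb G t {1,2} x \<notin> {v0, v1, v2}}"

text \<open>For an outer flag z, the index k such that the outer path containing z's edge is the
path between the two marked vertices other than v_k.\<close>
definition path_label :: "'o set \<Rightarrow> 'o fsys \<Rightarrow> 'o set \<Rightarrow> 'o set \<Rightarrow> 'o set \<Rightarrow> 'o set \<Rightarrow> 'o \<Rightarrow> nat" where
  "path_label G t outer v0 v1 v2 z =
     (THE k. k < 3 \<and> [v0, v1, v2] ! k \<notin>
        {orb G t {1,2} w | w. (z, w) \<in> (bstep G t outer v0 v1 v2)\<^sup>*})"

text \<open>Chamber system of B_{O(P)}: chambers are pairs (chamber of P, chamber of O).\<close>
definition op_sys :: "'f fsys \<Rightarrow> 'o set \<Rightarrow> 'o fsys \<Rightarrow> ('o set \<Rightarrow> nat) \<Rightarrow> 'o set \<Rightarrow>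
    'o set \<Rightarrow> 'o set \<Rightarrow> 'o set \<Rightarrow> ('f \<times> 'o set) fsys" where
  "op_sys s G t c outer v0 v1 v2 i fy =
     (let f = fst fy; y = snd fy; z = t 2 (opp_flag G t c y i); y' = orb G t {0,1} z in
      if y' \<noteq> outer then (f, y')
      else (s (path_label G t outer v0 v1 v2 z) f, y))"

definition c3_lsp_operation :: "'o set \<Rightarrow> 'o fsys \<Rightarrow> ('o set \<Rightarrow> nat) \<Rightarrow> 'o set \<Rightarrow>
    'o set \<Rightarrow> 'o set \<Rightarrow> 'o set \<Rightarrow> bool" where
  "c3_lsp_operation G t c outer v0 v1 v2 \<longleftrightarrow> lsp_operation G t c outer v0 v1 v2 \<and>
     (\<forall>(F :: nat set) (s :: nat fsys). polyhedral F s \<longrightarrow>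
        polyhedral (F \<times> op_chambers G t outer) (op_sys s G t c outer v0 v1 v2))"

end

theory Submission
  imports Defs "HOL-Library.FuncSet"
begin


declare One_nat_def [simp del]

definition pr :: "nat \<times> nat \<times> nat \<times> nat \<Rightarrow> nat" where
  "pr = (\<lambda>(a,b,c,d). a + 4*(b + 4*(c + 4*d)))"
definition P4 :: "(nat \<times> nat \<times> nat \<times> nat) set" where
  "P4 = {(a,b,c,d). a<4 \<and> b<4 \<and> c<4 \<and> d<4 \<and> a\<noteq>b \<and> a\<noteq>c \<and> a\<noteq>d \<and> b\<noteq>c \<and> b\<noteq>d \<and> c\<noteq>d}"
definition FT :: "nat set" where "FT = pr ` P4"
definition unpr :: "nat \<Rightarrow> nat \<times> nat \<times> nat \<times> nat" where
  "unpr n = (n mod 4, n div 4 mod 4, n div 4 div 4 mod 4, n div 4 div 4 div 4)"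
definition sT :: "nat fsys" where
  "sT i n = (case unpr n of (a,b,c,d) \<Rightarrow>
     if i = 0 then pr (b,a,c,d) else if i = 1 then pr (a,c,b,d) else if i = 2 then pr (a,b,d,c)
     else n + 256)"

lemma m4: "(a::nat)<4 \<Longrightarrow> (a + 4*k) mod 4 = a" "(a::nat)<4 \<Longrightarrow> (a + 4*k) div 4 = k"
  by simp_all

lemma unpr_pr: "a<4 \<Longrightarrow> b<4 \<Longrightarrow> c<4 \<Longrightarrow> unpr (pr (a,b,c,d)) = (a,b,c,d)"
  unfolding unpr_def pr_def by (simp only: split m4)

lemma pr_lt: "a<4 \<Longrightarrow> b<4 \<Longrightarrow> c<4 \<Longrightarrow> d<4 \<Longrightarrow> pr (a,b,c,d) < 256"
  unfolding pr_def by simp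

lemma pr_inj: "a<4 \<Longrightarrow> b<4 \<Longrightarrow> c<4 \<Longrightarrow> a'<4 \<Longrightarrow> b'<4 \<Longrightarrow> c'<4 \<Longrightarrow>
   pr (a,b,c,d) = pr (a',b',c',d') \<longleftrightarrow> (a,b,c,d) = (a',b',c',d')"
  by (metis unpr_pr)

lemma P4D: "(a,b,c,d) \<in> P4 \<Longrightarrow> a<4 \<and> b<4 \<and> c<4 \<and> d<4 \<and> a\<noteq>b \<and> a\<noteq>c \<and> a\<noteq>d \<and> b\<noteq>c \<and> b\<noteq>d \<and> c\<noteq>d"
  unfolding P4_def by simp

lemma P4I: "a<4 \<Longrightarrow> b<4 \<Longrightarrow> c<4 \<Longrightarrow> d<4 \<Longrightarrow> a\<noteq>b \<Longrightarrow> a\<noteq>c \<Longrightarrow> a\<noteq>d \<Longrightarrow> b\<noteq>c \<Longrightarrow> b\<noteq>d \<Longrightarrow> c\<noteq>d \<Longrightarrow> (a,b,c,d) \<in> P4"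
  unfolding P4_def by simp

lemma cover: "(a,b,c,d) \<in> P4 \<Longrightarrow> x < 4 \<Longrightarrow> x = a \<or> x = b \<or> x = c \<or> x = d"
proof -
  assume a: "(a,b,c,d) \<in> P4" "x < 4"
  note d = P4D[OF a(1)]
  have "{a,b,c,d} \<subseteq> {0..<4}" using d by auto
  moreover have "card {a,b,c,d} = 4" using d by simp
  ultimately have "{a,b,c,d} = {0..<4}" by (intro card_subset_eq) auto
  then show ?thesis using a(2) by (metis atLeastLessThan_iff insertE le0 singletonD)
qed

lemma compl2: "a<4 \<Longrightarrow> b<4 \<Longrightarrow> a\<noteq>b \<Longrightarrow> \<exists>z w. (a,b,z,w) \<in> P4"
  apply (rule exI[of _ "if a\<noteq>0 \<and> b\<noteq>0 then 0 else if a\<noteq>1 \<and> b\<noteq>1 then 1 else 2"])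
  apply (rule exI[of _ "if a\<noteq>3 \<and> b\<noteq>3 then 3 else if a\<noteq>2 \<and> b\<noteq>2 then 2 else 1"])
  apply (rule P4I) by simp_all

lemma perm3: "(a,b,c,d) \<in> P4 \<Longrightarrow> (a,b',c',d') \<in> P4 \<Longrightarrow>
  (b'=b \<and> c'=c \<and> d'=d) \<or> (b'=b \<and> c'=d \<and> d'=c) \<or> (b'=c \<and> c'=b \<and> d'=d) \<or>
  (b'=c \<and> c'=d \<and> d'=b) \<or> (b'=d \<and> c'=b \<and> d'=c) \<or> (b'=d \<and> c'=c \<and> d'=b)"
proof -
  assume a: "(a,b,c,d) \<in> P4" "(a,b',c',d') \<in> P4"
  note d = P4D[OF a(1)] and d' = P4D[OF a(2)]
  have "b' = b \<or> b' = c \<or> b' = d" using cover[OF a(1), of b'] d' by blast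
  moreover have "c' = b \<or> c' = c \<or> c' = d" using cover[OF a(1), of c'] d' by blast
  moreover have "d' = b \<or> d' = c \<or> d' = d" using cover[OF a(1), of d'] d' by blast
  ultimately show ?thesis using d' by metis
qed



lemma step_in: "x \<in> F \<Longrightarrow> i \<in> I \<Longrightarrow> (x, s i x) \<in> step F s I"
  unfolding step_def by blast

lemma stepE: "(x,y) \<in> step F s I \<Longrightarrow> x \<in> F \<and> (\<exists>i\<in>I. y = s i x)"
  unfolding step_def by blast

lemma step_mono: "I \<subseteq> J \<Longrightarrow> step F s I \<subseteq> step F s J"
  unfolding step_def by blast

lemma orb_eqI:
  assumes "x \<in> Q" "\<And>q i. q \<in> Q \<Longrightarrow> q \<in> F \<Longrightarrow> i \<in> I \<Longrightarrow> s i q \<in> Q"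
    "\<And>q. q \<in> Q \<Longrightarrow> (x,q) \<in> (step F s I)\<^sup>*"
  shows "orb F s I x = Q"
proof
  show "orb F s I x \<subseteq> Q"
  proof
    fix y assume "y \<in> orb F s I x"
    then have "(x,y) \<in> (step F s I)\<^sup>*" unfolding orb_def by simp
    then show "y \<in> Q"
    proof (induction rule: rtrancl_induct)
      case base then show ?case using assms(1) .
    next
      case (step y z) then show ?case using assms(2) stepE by metis
    qed
  qed
  show "Q \<subseteq> orb F s I x" using assms(3) unfolding orb_def by blast
qed

lemma P4_perm: "(a,b,c,d) \<in> P4 \<Longrightarrow> (b,a,c,d) \<in> P4 \<and> (a,c,b,d) \<in> P4 \<and> (a,b,d,c) \<in> P4"
  unfolding P4_def by auto

lemma pr_FT: "(a,b,c,d) \<in> P4 \<Longrightarrow> pr (a,b,c,d) \<in> FT"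
  unfolding FT_def by blast

lemma FT_E: "x \<in> FT \<Longrightarrow> (\<And>a b c d. x = pr (a,b,c,d) \<Longrightarrow> (a,b,c,d) \<in> P4 \<Longrightarrow> P) \<Longrightarrow> P"
  unfolding FT_def by auto

lemma pr_inj4: "(a,b,c,d) \<in> P4 \<Longrightarrow> (a',b',c',d') \<in> P4 \<Longrightarrow>
   pr (a,b,c,d) = pr (a',b',c',d') \<longleftrightarrow> a = a' \<and> b = b' \<and> c = c' \<and> d = d'"
  using pr_inj P4D by (metis prod.inject)

lemma sT0: "(a,b,c,d) \<in> P4 \<Longrightarrow> sT 0 (pr (a,b,c,d)) = pr (b,a,c,d)"
  unfolding sT_def using P4D unpr_pr by simp
lemma sT1: "(a,b,c,d) \<in> P4 \<Longrightarrow> sT 1 (pr (a,b,c,d)) = pr (a,c,b,d)"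
  unfolding sT_def using P4D unpr_pr by simp
lemma sT2: "(a,b,c,d) \<in> P4 \<Longrightarrow> sT 2 (pr (a,b,c,d)) = pr (a,b,d,c)"
  unfolding sT_def using P4D unpr_pr by simp
lemma sT3: "k \<ge> 3 \<Longrightarrow> sT k x = x + 256"
  unfolding sT_def by (simp split: prod.split)

lemma FT_lt: "x \<in> FT \<Longrightarrow> x < 256"
  by (erule FT_E) (use P4D pr_lt in blast)

lemma T0r: "(x, pr (a,b,c,d)) \<in> (step FT sT I)\<^sup>* \<Longrightarrow> (a,b,c,d) \<in> P4 \<Longrightarrow> 0 \<in> I \<Longrightarrow>
   (x, pr (b,a,c,d)) \<in> (step FT sT I)\<^sup>*"
  by (metis rtrancl.rtrancl_into_rtrancl step_in pr_FT sT0)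
lemma T1r: "(x, pr (a,b,c,d)) \<in> (step FT sT I)\<^sup>* \<Longrightarrow> (a,b,c,d) \<in> P4 \<Longrightarrow> 1 \<in> I \<Longrightarrow>
   (x, pr (a,c,b,d)) \<in> (step FT sT I)\<^sup>*"
  by (metis rtrancl.rtrancl_into_rtrancl step_in pr_FT sT1)
lemma T2r: "(x, pr (a,b,c,d)) \<in> (step FT sT I)\<^sup>* \<Longrightarrow> (a,b,c,d) \<in> P4 \<Longrightarrow> 2 \<in> I \<Longrightarrow>
   (x, pr (a,b,d,c)) \<in> (step FT sT I)\<^sup>*"
  by (metis rtrancl.rtrancl_into_rtrancl step_in pr_FT sT2)

definition VT :: "nat \<Rightarrow> nat set" where
  "VT a = {pr (a,x,y,z) | x y z. (a,x,y,z) \<in> P4}"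
definition ET :: "nat \<Rightarrow> nat \<Rightarrow> nat set" where
  "ET a b = {pr (x,y,z,w) | x y z w. (x,y,z,w) \<in> P4 \<and> {x,y} = {a,b}}"
definition FcT :: "nat \<Rightarrow> nat set" where
  "FcT d = {pr (x,y,z,d) | x y z. (x,y,z,d) \<in> P4}"

lemma VT_mem: "(x,y,z,w) \<in> P4 \<Longrightarrow> pr (x,y,z,w) \<in> VT a \<longleftrightarrow> x = a"
  unfolding VT_def using pr_inj4 by blast
lemma ET_mem: "(x,y,z,w) \<in> P4 \<Longrightarrow> pr (x,y,z,w) \<in> ET a b \<longleftrightarrow> {x,y} = {a,b}"
  unfolding ET_def using pr_inj4 by blast
lemma FcT_mem: "(x,y,z,w) \<in> P4 \<Longrightarrow> pr (x,y,z,w) \<in> FcT d \<longleftrightarrow> w = d"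
  unfolding FcT_def using pr_inj4 by blast

lemma perm_v: "(a,b,c,d) \<in> P4 \<Longrightarrow> (a,b',c',d') \<in> P4 \<Longrightarrow>
  (pr (a,b,c,d), pr (a,b',c',d')) \<in> (step FT sT {1,2})\<^sup>*"
proof -
  assume a: "(a,b,c,d) \<in> P4" "(a,b',c',d') \<in> P4"
  note p = P4_perm[OF a(1)]
  have p2: "(a,c,d,b) \<in> P4" "(a,d,b,c) \<in> P4" using P4_perm p by blast+
  have r0: "(pr (a,b,c,d), pr (a,b,c,d)) \<in> (step FT sT {1,2})\<^sup>*" by simp
  have r1: "(pr (a,b,c,d), pr (a,c,b,d)) \<in> (step FT sT {1,2})\<^sup>*" by (rule T1r[OF r0 a(1)]) simp
  have r2: "(pr (a,b,c,d), pr (a,b,d,c)) \<in> (step FT sT {1,2})\<^sup>*" by (rule T2r[OF r0 a(1)]) simp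
  have r3: "(pr (a,b,c,d), pr (a,c,d,b)) \<in> (step FT sT {1,2})\<^sup>*" by (rule T2r[OF r1]) (use p in simp_all)
  have r4: "(pr (a,b,c,d), pr (a,d,b,c)) \<in> (step FT sT {1,2})\<^sup>*" by (rule T1r[OF r2]) (use p in simp_all)
  have r5: "(pr (a,b,c,d), pr (a,d,c,b)) \<in> (step FT sT {1,2})\<^sup>*" by (rule T1r[OF r3]) (use p2 in simp_all)
  show ?thesis using perm3[OF a] by (elim disjE conjE) (simp_all add: r0 r1 r2 r3 r4 r5 del: One_nat_def)
qed

lemma perm_f: "(a,b,c,d) \<in> P4 \<Longrightarrow> (a',b',c',d) \<in> P4 \<Longrightarrow>
  (pr (a,b,c,d), pr (a',b',c',d)) \<in> (step FT sT {0,1})\<^sup>*"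
proof -
  assume a: "(a,b,c,d) \<in> P4" "(a',b',c',d) \<in> P4"
  note p = P4_perm[OF a(1)]
  have p2: "(b,c,a,d) \<in> P4" "(c,a,b,d) \<in> P4" using P4_perm p by blast+
  have pp: "(a'=a \<and> b'=b \<and> c'=c) \<or> (a'=b \<and> b'=a \<and> c'=c) \<or> (a'=a \<and> b'=c \<and> c'=b) \<or>
    (a'=b \<and> b'=c \<and> c'=a) \<or> (a'=c \<and> b'=a \<and> c'=b) \<or> (a'=c \<and> b'=b \<and> c'=a)"
  proof -
    note d = P4D[OF a(1)] and d' = P4D[OF a(2)]
    have "a' = a \<or> a' = b \<or> a' = c" using cover[OF a(1), of a'] d' by blast
    moreover have "b' = a \<or> b' = b \<or> b' = c" using cover[OF a(1), of b'] d' by blast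
    moreover have "c' = a \<or> c' = b \<or> c' = c" using cover[OF a(1), of c'] d' by blast
    ultimately show ?thesis using d' by metis
  qed
  have r0: "(pr (a,b,c,d), pr (a,b,c,d)) \<in> (step FT sT {0,1})\<^sup>*" by simp
  have r1: "(pr (a,b,c,d), pr (b,a,c,d)) \<in> (step FT sT {0,1})\<^sup>*" by (rule T0r[OF r0 a(1)]) simp
  have r2: "(pr (a,b,c,d), pr (a,c,b,d)) \<in> (step FT sT {0,1})\<^sup>*" by (rule T1r[OF r0 a(1)]) simp
  have r3: "(pr (a,b,c,d), pr (b,c,a,d)) \<in> (step FT sT {0,1})\<^sup>*" by (rule T1r[OF r1]) (use p in simp_all)
  have r4: "(pr (a,b,c,d), pr (c,a,b,d)) \<in> (step FT sT {0,1})\<^sup>*" by (rule T0r[OF r2]) (use p in simp_all)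
  have r5: "(pr (a,b,c,d), pr (c,b,a,d)) \<in> (step FT sT {0,1})\<^sup>*" by (rule T0r[OF r3]) (use p2 in simp_all)
  show ?thesis using pp by (elim disjE conjE) (simp_all add: r0 r1 r2 r3 r4 r5 del: One_nat_def)
qed

lemma perm_e: "(a,b,c,d) \<in> P4 \<Longrightarrow> (x,y,z,w) \<in> P4 \<Longrightarrow> {x,y} = {a,b} \<Longrightarrow>
  (pr (a,b,c,d), pr (x,y,z,w)) \<in> (step FT sT {0,2})\<^sup>*"
proof -
  assume a: "(a,b,c,d) \<in> P4" "(x,y,z,w) \<in> P4" "{x,y} = {a,b}"
  note p = P4_perm[OF a(1)]
  note d = P4D[OF a(1)] and d' = P4D[OF a(2)]
  have xy: "(x = a \<and> y = b) \<or> (x = b \<and> y = a)" using a(3) d by (metis doubleton_eq_iff)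
  have zw0: "z = c \<or> z = d" using cover[OF a(1), of z] d' xy by blast
  have zw1: "w = c \<or> w = d" using cover[OF a(1), of w] d' xy by blast
  have zw: "(z = c \<and> w = d) \<or> (z = d \<and> w = c)" using zw0 zw1 d' by blast
  have r0: "(pr (a,b,c,d), pr (a,b,c,d)) \<in> (step FT sT {0,2})\<^sup>*" by simp
  have r1: "(pr (a,b,c,d), pr (b,a,c,d)) \<in> (step FT sT {0,2})\<^sup>*" by (rule T0r[OF r0 a(1)]) simp
  have r2: "(pr (a,b,c,d), pr (a,b,d,c)) \<in> (step FT sT {0,2})\<^sup>*" by (rule T2r[OF r0 a(1)]) simp
  have r3: "(pr (a,b,c,d), pr (b,a,d,c)) \<in> (step FT sT {0,2})\<^sup>*" by (rule T2r[OF r1]) (use p in simp_all)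
  show ?thesis using xy zw by (elim disjE conjE) (simp_all add: r0 r1 r2 r3 del: One_nat_def)
qed

lemma orb_v: "(a,b,c,d) \<in> P4 \<Longrightarrow> orb FT sT {1,2} (pr (a,b,c,d)) = VT a"
proof (rule orb_eqI)
  assume a: "(a,b,c,d) \<in> P4"
  show "pr (a,b,c,d) \<in> VT a" using a by (simp add: VT_mem)
  show "sT i q \<in> VT a" if h: "q \<in> VT a" "q \<in> FT" "i \<in> {1,2}" for q i
  proof -
    obtain x y z where q: "q = pr (a,x,y,z)" "(a,x,y,z) \<in> P4" using h(1) unfolding VT_def by blast
    have "i = 1 \<or> i = 2" using h(3) by blast
    then show ?thesis by (elim disjE) (simp_all add: q sT1[OF q(2)] sT2[OF q(2)] VT_mem P4_perm[OF q(2)] del: One_nat_def)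
  qed
  show "(pr (a,b,c,d), q) \<in> (step FT sT {1,2})\<^sup>*" if "q \<in> VT a" for q
    using that a perm_v unfolding VT_def by blast
qed

lemma orb_f: "(a,b,c,d) \<in> P4 \<Longrightarrow> orb FT sT {0,1} (pr (a,b,c,d)) = FcT d"
proof (rule orb_eqI)
  assume a: "(a,b,c,d) \<in> P4"
  show "pr (a,b,c,d) \<in> FcT d" using a by (simp add: FcT_mem)
  show "sT i q \<in> FcT d" if h: "q \<in> FcT d" "q \<in> FT" "i \<in> {0,1}" for q i
  proof -
    obtain x y z where q: "q = pr (x,y,z,d)" "(x,y,z,d) \<in> P4" using h(1) unfolding FcT_def by blast
    have "i = 0 \<or> i = 1" using h(3) by blast
    then show ?thesis by (elim disjE) (simp_all add: q sT0[OF q(2)] sT1[OF q(2)] FcT_mem P4_perm[OF q(2)] del: One_nat_def)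
  qed
  show "(pr (a,b,c,d), q) \<in> (step FT sT {0,1})\<^sup>*" if "q \<in> FcT d" for q
    using that a perm_f unfolding FcT_def by blast
qed

lemma orb_e: "(a,b,c,d) \<in> P4 \<Longrightarrow> orb FT sT {0,2} (pr (a,b,c,d)) = ET a b"
proof (rule orb_eqI)
  assume a: "(a,b,c,d) \<in> P4"
  show "pr (a,b,c,d) \<in> ET a b" using a by (simp add: ET_mem)
  show "sT i q \<in> ET a b" if h: "q \<in> ET a b" "q \<in> FT" "i \<in> {0,2}" for q i
  proof -
    obtain x y z w where q: "q = pr (x,y,z,w)" "(x,y,z,w) \<in> P4" "{x,y} = {a,b}"
      using h(1) unfolding ET_def by blast
    have "{y,x} = {a,b}" using q(3) by blast
    moreover have "i = 0 \<or> i = 2" using h(3) by blast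
    ultimately show ?thesis by (elim disjE) (simp_all add: q sT0[OF q(2)] sT2[OF q(2)] ET_mem P4_perm[OF q(2)] del: One_nat_def)
  qed
  show "(pr (a,b,c,d), q) \<in> (step FT sT {0,2})\<^sup>*" if "q \<in> ET a b" for q
    using that a perm_e unfolding ET_def by blast
qed



lemma compl1: "a<4 \<Longrightarrow> \<exists>b c d. (a,b,c,d) \<in> P4"
proof (cases "a = 0")
  case True
  then show ?thesis using compl2[of a 1] by auto
next
  case False
  assume "a < 4"
  then show ?thesis using compl2[of a 0] False by auto
qed

lemma compl1': "d<4 \<Longrightarrow> \<exists>a b c. (a,b,c,d) \<in> P4"
proof -
  assume "d<4"
  then obtain b c e where "(d,b,c,e) \<in> P4" using compl1 by blast
  then have "(b,c,e,d) \<in> P4" using P4_perm by blast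
  then show ?thesis by blast
qed

lemma vertices_T: "vertices FT sT = VT ` {..<4}"
proof
  show "vertices FT sT \<subseteq> VT ` {..<4}"
  proof
    fix v assume "v \<in> vertices FT sT"
    then obtain x where x: "x \<in> FT" "v = orb FT sT {1,2} x" unfolding vertices_def by blast
    then obtain a b c d where t: "x = pr (a,b,c,d)" "(a,b,c,d) \<in> P4" by (blast elim: FT_E)
    then show "v \<in> VT ` {..<4}" using x orb_v P4D by auto
  qed
  show "VT ` {..<4} \<subseteq> vertices FT sT"
  proof
    fix v assume "v \<in> VT ` {..<4}"
    then obtain a where a: "a < 4" "v = VT a" by auto
    then obtain b c d where t: "(a,b,c,d) \<in> P4" using compl1 by blast
    then have "v = orb FT sT {1,2} (pr (a,b,c,d))" using orb_v a by simp
    then show "v \<in> vertices FT sT" unfolding vertices_def using pr_FT[OF t] by blast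
  qed
qed

lemma faces_T: "faces FT sT = FcT ` {..<4}"
proof
  show "faces FT sT \<subseteq> FcT ` {..<4}"
  proof
    fix v assume "v \<in> faces FT sT"
    then obtain x where x: "x \<in> FT" "v = orb FT sT {0,1} x" unfolding faces_def by blast
    then obtain a b c d where t: "x = pr (a,b,c,d)" "(a,b,c,d) \<in> P4" by (blast elim: FT_E)
    then show "v \<in> FcT ` {..<4}" using x orb_f P4D by auto
  qed
  show "FcT ` {..<4} \<subseteq> faces FT sT"
  proof
    fix v assume "v \<in> FcT ` {..<4}"
    then obtain d where a: "d < 4" "v = FcT d" by auto
    then obtain a b c where t: "(a,b,c,d) \<in> P4" using compl1' by blast
    then have "v = orb FT sT {0,1} (pr (a,b,c,d))" using orb_f a by simp
    then show "v \<in> faces FT sT" unfolding faces_def using pr_FT[OF t] by blast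
  qed
qed

lemma edges_T: "edges FT sT = {ET a b | a b. a < 4 \<and> b < 4 \<and> a \<noteq> b}"
proof
  show "edges FT sT \<subseteq> {ET a b | a b. a < 4 \<and> b < 4 \<and> a \<noteq> b}"
  proof
    fix v assume "v \<in> edges FT sT"
    then obtain x where x: "x \<in> FT" "v = orb FT sT {0,2} x" unfolding edges_def by blast
    then obtain a b c d where t: "x = pr (a,b,c,d)" "(a,b,c,d) \<in> P4" by (blast elim: FT_E)
    then show "v \<in> {ET a b | a b. a < 4 \<and> b < 4 \<and> a \<noteq> b}" using x orb_e P4D by fastforce
  qed
  show "{ET a b | a b. a < 4 \<and> b < 4 \<and> a \<noteq> b} \<subseteq> edges FT sT"
  proof
    fix v assume "v \<in> {ET a b | a b. a < 4 \<and> b < 4 \<and> a \<noteq> b}"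
    then obtain a b where a: "a < 4" "b < 4" "a \<noteq> b" "v = ET a b" by auto
    then obtain c d where t: "(a,b,c,d) \<in> P4" using compl2 by blast
    then have "v = orb FT sT {0,2} (pr (a,b,c,d))" using orb_e a by simp
    then show "v \<in> edges FT sT" unfolding edges_def using pr_FT[OF t] by blast
  qed
qed

lemma VT_inj: "a < 4 \<Longrightarrow> VT a = VT b \<Longrightarrow> a = b"
proof -
  assume "a < 4" "VT a = VT b"
  then obtain x y z where t: "(a,x,y,z) \<in> P4" using compl1 by blast
  then have "pr (a,x,y,z) \<in> VT b" using \<open>VT a = VT b\<close> VT_mem by blast
  then show "a = b" using VT_mem[OF t] by simp
qed

lemma VT_ET: "a < 4 \<Longrightarrow> b < 4 \<Longrightarrow> a \<noteq> b \<Longrightarrow> VT c \<inter> ET a b \<noteq> {} \<longleftrightarrow> c = a \<or> c = b"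
proof
  assume h: "a < 4" "b < 4" "a \<noteq> b"
  show "VT c \<inter> ET a b \<noteq> {} \<Longrightarrow> c = a \<or> c = b"
  proof -
    assume "VT c \<inter> ET a b \<noteq> {}"
    then obtain q where q: "q \<in> VT c" "q \<in> ET a b" by blast
    then obtain x y z w where t: "q = pr (x,y,z,w)" "(x,y,z,w) \<in> P4" "{x,y} = {a,b}"
      unfolding ET_def by blast
    then have "x = c" using q VT_mem by blast
    then show ?thesis using t(3) by (metis doubleton_eq_iff)
  qed
  show "c = a \<or> c = b \<Longrightarrow> VT c \<inter> ET a b \<noteq> {}"
  proof -
    assume "c = a \<or> c = b"
    then show ?thesis
    proof
      assume c: "c = a"
      obtain z w where t: "(a,b,z,w) \<in> P4" using compl2 h by blast
      show ?thesis using VT_mem[OF t] ET_mem[OF t] c by blast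
    next
      assume c: "c = b"
      obtain z w where t: "(b,a,z,w) \<in> P4" using compl2 h by metis
      have "{b,a} = {a,b}" by blast
      then show ?thesis using VT_mem[OF t] ET_mem[OF t] c by blast
    qed
  qed
qed

lemma VT_FcT: "a < 4 \<Longrightarrow> d < 4 \<Longrightarrow> VT a \<inter> FcT d \<noteq> {} \<longleftrightarrow> a \<noteq> d"
proof
  assume h: "a < 4" "d < 4"
  show "VT a \<inter> FcT d \<noteq> {} \<Longrightarrow> a \<noteq> d"
  proof -
    assume "VT a \<inter> FcT d \<noteq> {}"
    then obtain q where q: "q \<in> VT a" "q \<in> FcT d" by blast
    then obtain x y z where t: "q = pr (x,y,z,d)" "(x,y,z,d) \<in> P4" unfolding FcT_def by blast
    then have "x = a" using q VT_mem by blast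
    then show ?thesis using P4D[OF t(2)] by blast
  qed
  show "a \<noteq> d \<Longrightarrow> VT a \<inter> FcT d \<noteq> {}"
  proof -
    assume "a \<noteq> d"
    then obtain z w where t: "(a,d,z,w) \<in> P4" using compl2 h by blast
    then have t2: "(a,z,w,d) \<in> P4" using P4_perm by blast
    show ?thesis using VT_mem[OF t2] FcT_mem[OF t2] by blast
  qed
qed

lemma ET_FcT: "a < 4 \<Longrightarrow> b < 4 \<Longrightarrow> a \<noteq> b \<Longrightarrow> d < 4 \<Longrightarrow> ET a b \<inter> FcT d \<noteq> {} \<longleftrightarrow> d \<noteq> a \<and> d \<noteq> b"
proof
  assume h: "a < 4" "b < 4" "a \<noteq> b" "d < 4"
  show "ET a b \<inter> FcT d \<noteq> {} \<Longrightarrow> d \<noteq> a \<and> d \<noteq> b"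
  proof -
    assume "ET a b \<inter> FcT d \<noteq> {}"
    then obtain q where q: "q \<in> ET a b" "q \<in> FcT d" by blast
    then obtain x y z where t: "q = pr (x,y,z,d)" "(x,y,z,d) \<in> P4" unfolding FcT_def by blast
    then have "{x,y} = {a,b}" using q ET_mem by blast
    then show ?thesis using P4D[OF t(2)] by (metis doubleton_eq_iff)
  qed
  show "d \<noteq> a \<and> d \<noteq> b \<Longrightarrow> ET a b \<inter> FcT d \<noteq> {}"
  proof -
    assume dd: "d \<noteq> a \<and> d \<noteq> b"
    obtain z w where t: "(a,b,z,w) \<in> P4" using compl2 h by blast
    have t2: "(a,b,w,z) \<in> P4" using P4_perm[OF t] by blast
    have "d = z \<or> d = w" using cover[OF t h(4)] dd by blast
    then show ?thesis
    proof
      assume "d = z"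
      then have "pr (a,b,w,z) \<in> ET a b \<inter> FcT d" using ET_mem[OF t2] FcT_mem[OF t2] by simp
      then show ?thesis by blast
    next
      assume "d = w"
      then have "pr (a,b,z,w) \<in> ET a b \<inter> FcT d" using ET_mem[OF t] FcT_mem[OF t] by simp
      then show ?thesis by blast
    qed
  qed
qed

lemma ends_T: "a < 4 \<Longrightarrow> b < 4 \<Longrightarrow> a \<noteq> b \<Longrightarrow> ends FT sT (ET a b) = {VT a, VT b}"
proof -
  assume h: "a < 4" "b < 4" "a \<noteq> b"
  have "ends FT sT (ET a b) = {v \<in> VT ` {..<4}. v \<inter> ET a b \<noteq> {}}"
    unfolding ends_def vertices_T by simp
  also have "\<dots> = VT ` {c \<in> {..<4}. VT c \<inter> ET a b \<noteq> {}}" by blast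
  also have "{c \<in> {..<4}. VT c \<inter> ET a b \<noteq> {}} = {a,b}" using VT_ET[OF h] h by auto
  finally show ?thesis by simp
qed

lemma ET_eq: "a < 4 \<Longrightarrow> b < 4 \<Longrightarrow> a \<noteq> b \<Longrightarrow> {a,b} = {a',b'} \<Longrightarrow> ET a b = ET a' b'"
  unfolding ET_def by simp



lemma lt3: "(i::nat) < 3 \<Longrightarrow> i = 0 \<or> i = 1 \<or> i = 2"
  by (auto simp: One_nat_def)

lemma sub_connI:
  assumes "\<And>u w. u \<in> W \<Longrightarrow> w \<in> W \<Longrightarrow> u \<noteq> w \<Longrightarrow> \<exists>e\<in>Es. u \<in> ends F s e \<and> w \<in> ends F s e"
  shows "sub_connected F s W Es"
  unfolding sub_connected_def
proof (intro ballI)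
  fix u w assume h: "u \<in> W" "w \<in> W"
  show "(u, w) \<in> {(a, b). a \<in> W \<and> b \<in> W \<and> (\<exists>e\<in>Es. a \<in> ends F s e \<and> b \<in> ends F s e)}\<^sup>*"
  proof (cases "u = w")
    case True then show ?thesis by simp
  next
    case False then show ?thesis using assms[OF h False] h by (intro r_into_rtrancl) blast
  qed
qed

lemma P4_0123: "(0,1,2,3) \<in> P4" by (rule P4I) simp_all

lemma finite_FT: "finite FT"
proof -
  have "P4 \<subseteq> {..<4} \<times> {..<4} \<times> {..<4} \<times> {..<4}" unfolding P4_def by auto
  then have "finite P4" by (rule finite_subset) simp
  then show ?thesis unfolding FT_def by simp
qed

lemma T_conn: "x \<in> FT \<Longrightarrow> y \<in> FT \<Longrightarrow> (x,y) \<in> (step FT sT {0,1,2})\<^sup>*"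
proof -
  assume x: "x \<in> FT" and y: "y \<in> FT"
  obtain a b c d where t: "x = pr (a,b,c,d)" "(a,b,c,d) \<in> P4" using x by (blast elim: FT_E)
  obtain a' b' c' d' where t': "y = pr (a',b',c',d')" "(a',b',c',d') \<in> P4" using y by (blast elim: FT_E)
  have mono: "(step FT sT {1,2})\<^sup>* \<subseteq> (step FT sT {0,1,2})\<^sup>*"
    by (rule rtrancl_mono, rule step_mono) blast
  show ?thesis
  proof (cases "a' = a")
    case True
    then show ?thesis using perm_v[OF t(2)] t' t mono by blast
  next
    case False
    obtain z w where zw: "(a,a',z,w) \<in> P4" using compl2 False P4D[OF t(2)] P4D[OF t'(2)] by metis
    have r1: "(x, pr (a,a',z,w)) \<in> (step FT sT {0,1,2})\<^sup>*" using perm_v[OF t(2) zw] t mono by blast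
    have r2: "(x, pr (a',a,z,w)) \<in> (step FT sT {0,1,2})\<^sup>*" by (rule T0r[OF r1 zw]) simp
    have zw2: "(a',a,z,w) \<in> P4" using P4_perm[OF zw] by blast
    have r3: "(pr (a',a,z,w), y) \<in> (step FT sT {0,1,2})\<^sup>*" using perm_v[OF zw2 t'(2)] t' mono by blast
    show ?thesis using r2 r3 by simp
  qed
qed

lemma is_map_T: "is_map FT sT"
proof -
  have A: "sT 0 (sT 2 x) = sT 2 (sT 0 x) \<and> sT 0 (sT 2 x) \<noteq> x" if x: "x \<in> FT" for x
  proof -
    obtain a b c d where t: "x = pr (a,b,c,d)" "(a,b,c,d) \<in> P4" using x by (blast elim: FT_E)
    note p = P4_perm[OF t(2)] and dd = P4D[OF t(2)]
    have p2: "(b,a,d,c) \<in> P4" using P4_perm p by blast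
    show ?thesis using t p sT0 sT2 pr_inj4[OF p2 t(2)] dd by simp
  qed
  have B: "sT i x \<in> FT \<and> sT i (sT i x) = x \<and> sT i x \<noteq> x" if x: "x \<in> FT" and i: "i < 3" for x i
  proof -
    obtain a b c d where t: "x = pr (a,b,c,d)" "(a,b,c,d) \<in> P4" using x by (blast elim: FT_E)
    note p = P4_perm[OF t(2)] and dd = P4D[OF t(2)]
    have "i = 0 \<or> i = 1 \<or> i = 2" using i by (rule lt3)
    then show ?thesis
    proof (elim disjE)
      assume "i = 0" then show ?thesis using t p sT0 pr_FT pr_inj4[OF _ t(2)] dd by simp
    next
      assume "i = 1" then show ?thesis using t p sT1 pr_FT pr_inj4[OF _ t(2)] dd by simp
    next
      assume "i = 2" then show ?thesis using t p sT2 pr_FT pr_inj4[OF _ t(2)] dd by simp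
    qed
  qed
  show ?thesis unfolding is_map_def
    using finite_FT pr_FT[OF P4_0123] A B T_conn by blast
qed

definition par :: "nat \<times> nat \<times> nat \<times> nat \<Rightarrow> bool" where
  "par = (\<lambda>(a,b,c,d). (a<b) \<noteq> ((a<c) \<noteq> ((a<d) \<noteq> ((b<c) \<noteq> ((b<d) \<noteq> (c<d))))))"

lemma xor_perm: "((\<not>P) \<noteq> (A \<noteq> (B \<noteq> (C \<noteq> (D \<noteq> E))))) \<noteq> (P \<noteq> (C \<noteq> (D \<noteq> (A \<noteq> (B \<noteq> E)))))"
  "(A \<noteq> (B \<noteq> (C \<noteq> ((\<not>P) \<noteq> (D \<noteq> E))))) \<noteq> (B \<noteq> (A \<noteq> (C \<noteq> (P \<noteq> (E \<noteq> D)))))"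
  "(A \<noteq> (B \<noteq> (C \<noteq> (D \<noteq> (E \<noteq> (\<not>P)))))) \<noteq> (A \<noteq> (C \<noteq> (B \<noteq> (E \<noteq> (D \<noteq> P)))))"
  by blast+

lemma par0: "a \<noteq> b \<Longrightarrow> par (b,a,c,d) \<noteq> par (a,b,c,d)"
proof -
  assume "a \<noteq> b"
  then have "(b<a) = (\<not> a<b)" by auto
  then show ?thesis unfolding par_def by (simp only: split) (rule xor_perm(1))
qed
lemma par1: "b \<noteq> c \<Longrightarrow> par (a,c,b,d) \<noteq> par (a,b,c,d)"
proof -
  assume "b \<noteq> c"
  then have "(c<b) = (\<not> b<c)" by auto
  then show ?thesis unfolding par_def by (simp only: split) (rule xor_perm(2))
qed
lemma par2: "c \<noteq> d \<Longrightarrow> par (a,b,d,c) \<noteq> par (a,b,c,d)"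
proof -
  assume "c \<noteq> d"
  then have "(d<c) = (\<not> c<d)" by auto
  then show ?thesis unfolding par_def by (simp only: split) (rule xor_perm(3))
qed

lemma orientable_T: "orientable FT sT"
  unfolding orientable_def
proof (intro exI[of _ "\<lambda>x. par (unpr x)"] ballI allI impI)
  fix x i assume x: "x \<in> FT" and "(i::nat) < 3"
  obtain a b c d where t: "x = pr (a,b,c,d)" "(a,b,c,d) \<in> P4" using x by (blast elim: FT_E)
  note dd = P4D[OF t(2)]
  have "i = 0 \<or> i = 1 \<or> i = 2" using \<open>i < 3\<close> by (rule lt3)
  then show "par (unpr (sT i x)) \<noteq> par (unpr x)"
  proof (elim disjE)
    assume "i = 0"
      have u1: "unpr (sT i x) = (b,a,c,d)" using \<open>i = 0\<close> sT0[OF t(2)] t(1) unpr_pr dd by simp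
      have u2: "unpr x = (a,b,c,d)" using t(1) unpr_pr dd by simp
      show ?thesis unfolding u1 u2 by (rule par0) (use dd in simp)
  next
    assume "i = 1"
      have u1: "unpr (sT i x) = (a,c,b,d)" using \<open>i = 1\<close> sT1[OF t(2)] t(1) unpr_pr dd by simp
      have u2: "unpr x = (a,b,c,d)" using t(1) unpr_pr dd by simp
      show ?thesis unfolding u1 u2 by (rule par1) (use dd in simp)
  next
    assume "i = 2"
      have u1: "unpr (sT i x) = (a,b,d,c)" using \<open>i = 2\<close> sT2[OF t(2)] t(1) unpr_pr dd by simp
      have u2: "unpr x = (a,b,c,d)" using t(1) unpr_pr dd by simp
      show ?thesis unfolding u1 u2 by (rule par2) (use dd in simp)
  qed
qed



lemma edges_TE: "e \<in> edges FT sT \<Longrightarrow> (\<And>a b. a < 4 \<Longrightarrow> b < 4 \<Longrightarrow> a \<noteq> b \<Longrightarrow> e = ET a b \<Longrightarrow> P) \<Longrightarrow> P"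
  unfolding edges_T by blast

lemma ET_in: "a < 4 \<Longrightarrow> b < 4 \<Longrightarrow> a \<noteq> b \<Longrightarrow> ET a b \<in> edges FT sT"
  unfolding edges_T by blast

lemma VT_neq: "a < 4 \<Longrightarrow> b < 4 \<Longrightarrow> a \<noteq> b \<Longrightarrow> VT a \<noteq> VT b"
  using VT_inj by blast

lemma simple_T: "simple_graph FT sT"
  unfolding simple_graph_def
proof (intro conjI ballI impI)
  fix e assume "e \<in> edges FT sT"
  then obtain a b where h: "a < 4" "b < 4" "a \<noteq> b" "e = ET a b" by (rule edges_TE)
  show "card (ends FT sT e) = 2" unfolding h(4) ends_T[OF h(1-3)] using VT_neq[OF h(1-3)] by simp
next
  fix e e' assume "e \<in> edges FT sT" "e' \<in> edges FT sT" and eq: "ends FT sT e = ends FT sT e'"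
  obtain a b where h: "a < 4" "b < 4" "a \<noteq> b" "e = ET a b" using \<open>e \<in> edges FT sT\<close> by (rule edges_TE)
  obtain a' b' where h': "a' < 4" "b' < 4" "a' \<noteq> b'" "e' = ET a' b'" using \<open>e' \<in> edges FT sT\<close> by (rule edges_TE)
  have "{VT a, VT b} = {VT a', VT b'}" using eq unfolding h(4) h'(4) ends_T[OF h(1-3)] ends_T[OF h'(1-3)] .
  then have "(VT a = VT a' \<and> VT b = VT b') \<or> (VT a = VT b' \<and> VT b = VT a')" by (metis doubleton_eq_iff)
  then have "(a = a' \<and> b = b') \<or> (a = b' \<and> b = a')" using VT_inj h h' by metis
  then have "{a,b} = {a',b'}" by blast
  then show "e = e'" using ET_eq[OF h(1-3)] h(4) h'(4) by simp
qed

lemma card_vertices_T: "card (vertices FT sT) = 4"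
proof -
  have "inj_on VT {..<4}" using VT_inj by (meson inj_onI lessThan_iff)
  then show ?thesis unfolding vertices_T by (simp add: card_image)
qed

lemma kconn_T: "k_connected 3 FT sT"
  unfolding k_connected_def
proof (intro conjI allI impI)
  show "card (vertices FT sT) > 3" using card_vertices_T by simp
  fix S assume "S \<subseteq> vertices FT sT" "card S < 3"
  show "sub_connected FT sT (vertices FT sT - S) {e \<in> edges FT sT. ends FT sT e \<inter> S = {}}"
  proof (rule sub_connI)
    fix u w assume u: "u \<in> vertices FT sT - S" and w: "w \<in> vertices FT sT - S" and uw: "u \<noteq> w"
    obtain a where a: "a < 4" "u = VT a" using u unfolding vertices_T by blast
    obtain b where b: "b < 4" "w = VT b" using w unfolding vertices_T by blast
    have ab: "a \<noteq> b" using uw unfolding a(2) b(2) by blast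
    have e: "ends FT sT (ET a b) = {u, w}" unfolding a(2) b(2) by (rule ends_T[OF a(1) b(1) ab])
    have "ends FT sT (ET a b) \<inter> S = {}" unfolding e using u w by blast
    then have "ET a b \<in> {e \<in> edges FT sT. ends FT sT e \<inter> S = {}}" using ET_in[OF a(1) b(1) ab] by blast
    moreover have "u \<in> ends FT sT (ET a b) \<and> w \<in> ends FT sT (ET a b)" unfolding e by blast
    ultimately show "\<exists>e\<in>{e \<in> edges FT sT. ends FT sT e \<inter> S = {}}. u \<in> ends FT sT e \<and> w \<in> ends FT sT e"
      by (rule bexI[rotated])
  qed
qed

lemma faces_cond_T: "\<forall>f\<in>faces FT sT. \<forall>g\<in>faces FT sT. f \<noteq> g \<longrightarrow>
        sub_connected FT sT (face_vertices FT sT f \<inter> face_vertices FT sT g)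
                          (face_edges FT sT f \<inter> face_edges FT sT g)"
proof (intro ballI impI)
  fix f g assume f: "f \<in> faces FT sT" and g: "g \<in> faces FT sT" and fg: "f \<noteq> g"
  obtain d where d: "d < 4" "f = FcT d" using f unfolding faces_T by blast
  obtain d' where d': "d' < 4" "g = FcT d'" using g unfolding faces_T by blast
  show "sub_connected FT sT (face_vertices FT sT f \<inter> face_vertices FT sT g)
                          (face_edges FT sT f \<inter> face_edges FT sT g)"
  proof (rule sub_connI)
    fix u w assume u: "u \<in> face_vertices FT sT f \<inter> face_vertices FT sT g"
      and w: "w \<in> face_vertices FT sT f \<inter> face_vertices FT sT g" and uw: "u \<noteq> w"
    obtain a where a: "a < 4" "u = VT a" using u unfolding face_vertices_def vertices_T by blast
    obtain b where b: "b < 4" "w = VT b" using w unfolding face_vertices_def vertices_T by blast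
    have ab: "a \<noteq> b" using uw unfolding a(2) b(2) by blast
    have "VT a \<inter> FcT d \<noteq> {}" "VT a \<inter> FcT d' \<noteq> {}"
      using u unfolding a(2) d(2) d'(2) face_vertices_def by blast+
    then have ad: "a \<noteq> d" "a \<noteq> d'" using VT_FcT[OF a(1) d(1)] VT_FcT[OF a(1) d'(1)] by blast+
    have "VT b \<inter> FcT d \<noteq> {}" "VT b \<inter> FcT d' \<noteq> {}"
      using w unfolding b(2) d(2) d'(2) face_vertices_def by blast+
    then have bd: "b \<noteq> d" "b \<noteq> d'" using VT_FcT[OF b(1) d(1)] VT_FcT[OF b(1) d'(1)] by blast+
    have e: "ends FT sT (ET a b) = {u, w}" unfolding a(2) b(2) by (rule ends_T[OF a(1) b(1) ab])
    have i1: "ET a b \<inter> FcT d \<noteq> {}" using ET_FcT[OF a(1) b(1) ab d(1)] ad bd by blast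
    have i2: "ET a b \<inter> FcT d' \<noteq> {}" using ET_FcT[OF a(1) b(1) ab d'(1)] ad bd by blast
    have "ET a b \<in> face_edges FT sT f \<inter> face_edges FT sT g"
      unfolding face_edges_def d(2) d'(2) using ET_in[OF a(1) b(1) ab] i1 i2 by blast
    moreover have "u \<in> ends FT sT (ET a b) \<and> w \<in> ends FT sT (ET a b)" unfolding e by blast
    ultimately show "\<exists>e\<in>face_edges FT sT f \<inter> face_edges FT sT g. u \<in> ends FT sT e \<and> w \<in> ends FT sT e"
      by (rule bexI[rotated])
  qed
qed

lemma polyhedral_T: "polyhedral FT sT"
  unfolding polyhedral_def using is_map_T orientable_T simple_T kconn_T faces_cond_T by blast

lemma T_notconn: "k < 3 \<Longrightarrow> \<exists>x\<in>FT. \<exists>y\<in>FT. (x,y) \<notin> (step FT sT ({0,1,2} - {k}))\<^sup>*"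
proof -
  assume "k < 3"
  then have "k = 0 \<or> k = 1 \<or> k = 2" by (rule lt3)
  then show ?thesis
  proof (elim disjE)
    assume k: "k = 0"
    have J: "{0,1,2} - {k} = {1,2::nat}" using k by auto
    have t1: "(1,0,2,3) \<in> P4" by (rule P4I) simp_all
    have "pr (1,0,2,3) \<notin> orb FT sT {1,2} (pr (0,1,2,3))"
      unfolding orb_v[OF P4_0123] VT_mem[OF t1] by simp
    then show ?thesis unfolding J orb_def using pr_FT[OF t1] pr_FT[OF P4_0123] by blast
  next
    assume k: "k = 1"
    have J: "{0,1,2} - {k} = {0,2::nat}" using k by auto
    have t1: "(0,2,1,3) \<in> P4" by (rule P4I) simp_all
    have "{0,2} \<noteq> {0,1::nat}" by (auto simp: doubleton_eq_iff)
    then have "pr (0,2,1,3) \<notin> orb FT sT {0,2} (pr (0,1,2,3))"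
      unfolding orb_e[OF P4_0123] ET_mem[OF t1] by simp
    then show ?thesis unfolding J orb_def using pr_FT[OF t1] pr_FT[OF P4_0123] by blast
  next
    assume k: "k = 2"
    have J: "{0,1,2} - {k} = {0,1::nat}" using k by auto
    have t1: "(0,1,3,2) \<in> P4" by (rule P4I) simp_all
    have "pr (0,1,3,2) \<notin> orb FT sT {0,1} (pr (0,1,2,3))"
      unfolding orb_f[OF P4_0123] FcT_mem[OF t1] by simp
    then show ?thesis unfolding J orb_def using pr_FT[OF t1] pr_FT[OF P4_0123] by blast
  qed
qed



definition NN :: "'o set \<Rightarrow> 'o fsys \<Rightarrow> ('o set \<Rightarrow> nat) \<Rightarrow> nat \<Rightarrow> 'o set \<Rightarrow> 'o set" where
  "NN G t c i y = orb G t {0,1} (t 2 (opp_flag G t c y i))"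
definition KK :: "'o set \<Rightarrow> 'o fsys \<Rightarrow> ('o set \<Rightarrow> nat) \<Rightarrow> 'o set \<Rightarrow> 'o set \<Rightarrow> 'o set \<Rightarrow> 'o set \<Rightarrow> nat \<Rightarrow> 'o set \<Rightarrow> nat" where
  "KK G t c outer v0 v1 v2 i y = path_label G t outer v0 v1 v2 (t 2 (opp_flag G t c y i))"
definition nxt :: "'o set \<Rightarrow> 'o fsys \<Rightarrow> ('o set \<Rightarrow> nat) \<Rightarrow> 'o set \<Rightarrow> nat \<Rightarrow> 'o set \<Rightarrow> 'o set" where
  "nxt G t c outer i y = (if NN G t c i y \<noteq> outer then NN G t c i y else y)"

lemma op_sys_eq: "op_sys s G t c outer v0 v1 v2 i (f,y) =
  (if NN G t c i y \<noteq> outer then (f, NN G t c i y) else (s (KK G t c outer v0 v1 v2 i y) f, y))"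
  unfolding op_sys_def NN_def KK_def Let_def by simp

lemma snd_op_sys: "snd (op_sys s G t c outer v0 v1 v2 i x) = nxt G t c outer i (snd x)"
  by (cases x) (simp add: op_sys_eq nxt_def)

definition Rel :: "'o set \<Rightarrow> 'o fsys \<Rightarrow> ('o set \<Rightarrow> nat) \<Rightarrow> 'o set \<Rightarrow> ('o set \<times> 'o set) set" where
  "Rel G t c outer = {(y, nxt G t c outer i y) | y i. y \<in> op_chambers G t outer \<and> i < 3}"

lemma proj_snd:
  assumes "(p,q) \<in> (step (F \<times> op_chambers G t outer) (op_sys s G t c outer v0 v1 v2) {0,1,2})\<^sup>*"
  shows "(snd p, snd q) \<in> (Rel G t c outer)\<^sup>*"
  using assms
proof (induction rule: rtrancl_induct)
  case base then show ?case by simp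
next
  case (step q r)
  from stepE[OF step(2)] obtain i where i: "q \<in> F \<times> op_chambers G t outer" "i \<in> {0,1,2}"
     "r = op_sys s G t c outer v0 v1 v2 i q" by blast
  have "i < 3" using i(2) by auto
  then have "(snd q, snd r) \<in> Rel G t c outer" unfolding Rel_def using i snd_op_sys by fastforce
  then show ?case using step(3) by simp
qed

lemma O_props:
  assumes c3: "c3_lsp_operation G t c outer v0 v1 v2"
  defines "Y \<equiv> op_chambers G t outer"
  shows "Y \<noteq> {}"
    and "\<And>y i. y \<in> Y \<Longrightarrow> i < 3 \<Longrightarrow> NN G t c i y \<noteq> outer \<Longrightarrow> NN G t c i y \<in> Y"
    and "\<And>y i. y \<in> Y \<Longrightarrow> i < 3 \<Longrightarrow> NN G t c i y = outer \<Longrightarrow> KK G t c outer v0 v1 v2 i y < 3"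
    and "\<And>y y'. y \<in> Y \<Longrightarrow> y' \<in> Y \<Longrightarrow> (y,y') \<in> (Rel G t c outer)\<^sup>*"
    and "\<And>k. k < 3 \<Longrightarrow> \<exists>y\<in>Y. \<exists>i<3. NN G t c i y = outer \<and> KK G t c outer v0 v1 v2 i y = k"
proof -
  let ?s = "op_sys sT G t c outer v0 v1 v2"
  have "polyhedral (FT \<times> Y) ?s" using c3 polyhedral_T unfolding c3_lsp_operation_def Y_def by blast
  then have M: "is_map (FT \<times> Y) ?s" unfolding polyhedral_def by blast
  then show Yne: "Y \<noteq> {}" unfolding is_map_def by blast
  have cl: "?s i x \<in> FT \<times> Y" if "i < 3" "x \<in> FT \<times> Y" for i x
    using M that unfolding is_map_def by blast
  have conn: "(x,x') \<in> (step (FT \<times> Y) ?s {0,1,2})\<^sup>*" if "x \<in> FT \<times> Y" "x' \<in> FT \<times> Y" for x x'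
    using M that unfolding is_map_def by blast
  define x0 where "x0 = pr (0,1,2,3)"
  have x0: "x0 \<in> FT" unfolding x0_def by (rule pr_FT[OF P4_0123])
  show NY: "NN G t c i y \<in> Y" if "y \<in> Y" "i < 3" "NN G t c i y \<noteq> outer" for y i
    using cl[OF that(2), of "(x0,y)"] x0 that op_sys_eq[of sT G t c outer v0 v1 v2 i x0 y] by simp
  show KY: "KK G t c outer v0 v1 v2 i y < 3" if "y \<in> Y" "i < 3" "NN G t c i y = outer" for y i
  proof (rule ccontr)
    assume "\<not> KK G t c outer v0 v1 v2 i y < 3"
    then have "sT (KK G t c outer v0 v1 v2 i y) x0 = x0 + 256" using sT3 by simp
    moreover have "sT (KK G t c outer v0 v1 v2 i y) x0 \<in> FT"
      using cl[OF that(2), of "(x0,y)"] x0 that op_sys_eq[of sT G t c outer v0 v1 v2 i x0 y] by simp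
    ultimately have "x0 + 256 \<in> FT" by simp
    then show False using FT_lt[of "x0 + 256"] by simp
  qed
  show "(y,y') \<in> (Rel G t c outer)\<^sup>*" if "y \<in> Y" "y' \<in> Y" for y y'
  proof -
    have "((x0,y),(x0,y')) \<in> (step (FT \<times> op_chambers G t outer) ?s {0,1,2})\<^sup>*"
      using conn[of "(x0,y)" "(x0,y')"] x0 that unfolding Y_def by simp
    from proj_snd[OF this] show ?thesis by simp
  qed
  show "\<exists>y\<in>Y. \<exists>i<3. NN G t c i y = outer \<and> KK G t c outer v0 v1 v2 i y = k" if k: "k < 3" for k
  proof (rule ccontr)
    assume nk: "\<not> (\<exists>y\<in>Y. \<exists>i<3. NN G t c i y = outer \<and> KK G t c outer v0 v1 v2 i y = k)"
    have pf: "(fst p, fst q) \<in> (step FT sT ({0,1,2} - {k}))\<^sup>*"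
      if "(p,q) \<in> (step (FT \<times> Y) ?s {0,1,2})\<^sup>*" for p q
      using that
    proof (induction rule: rtrancl_induct)
      case base then show ?case by simp
    next
      case (step q r)
      from stepE[OF step(2)] obtain i where i: "q \<in> FT \<times> Y" "i \<in> {0,1,2}" "r = ?s i q" by blast
      have i3: "i < 3" using i(2) by auto
      obtain f y where q: "q = (f,y)" by (cases q)
      have fy: "f \<in> FT" "y \<in> Y" using i(1) q by auto
      show ?case
      proof (cases "NN G t c i y = outer")
        case False
        then have "fst r = fst q" using i(3) q by (simp add: op_sys_eq)
        then show ?thesis using step(3) by simp
      next
        case True
        let ?K = "KK G t c outer v0 v1 v2 i y"
        have K: "?K < 3" "?K \<noteq> k" using KY[OF fy(2) i3 True] nk fy(2) i3 True by blast+
        have "fst r = sT ?K f" using i(3) q True by (simp add: op_sys_eq)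
        moreover have "(fst q, sT ?K f) \<in> step FT sT ({0,1,2} - {k})"
        proof -
          have "?K \<in> {0,1,2} - {k}" using K lt3[OF K(1)] by blast
          then show ?thesis using step_in[OF fy(1), of ?K "{0,1,2} - {k}" sT] q by simp
        qed
        ultimately show ?thesis using step(3) by simp
      qed
    qed
    obtain y where y: "y \<in> Y" using Yne by blast
    have "\<forall>x\<in>FT. \<forall>x'\<in>FT. (x,x') \<in> (step FT sT ({0,1,2} - {k}))\<^sup>*"
    proof (intro ballI)
      fix x x' assume "x \<in> FT" "x' \<in> FT"
      then have "((x,y),(x',y)) \<in> (step (FT \<times> Y) ?s {0,1,2})\<^sup>*" using conn y by simp
      from pf[OF this] show "(x,x') \<in> (step FT sT ({0,1,2} - {k}))\<^sup>*" by simp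
    qed
    then show False using T_notconn[OF k] by blast
  qed
qed



lemma aut_finite: "finite X \<Longrightarrow> finite (aut X s)"
proof -
  assume fX: "finite X"
  have "aut X s \<subseteq> (\<lambda>g x. if x \<in> X then g x else x) ` (X \<rightarrow>\<^sub>E X)"
  proof
    fix \<phi> assume p: "\<phi> \<in> aut X s"
    then have b: "bij_betw \<phi> X X" and o: "\<forall>x. x \<notin> X \<longrightarrow> \<phi> x = x" unfolding aut_def by blast+
    have "restrict \<phi> X \<in> X \<rightarrow>\<^sub>E X" using bij_betw_apply[OF b] by auto
    moreover have "\<phi> = (\<lambda>x. if x \<in> X then restrict \<phi> X x else x)" using o by auto
    ultimately show "\<phi> \<in> (\<lambda>g x. if x \<in> X then g x else x) ` (X \<rightarrow>\<^sub>E X)" by blast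
  qed
  moreover have "finite (X \<rightarrow>\<^sub>E X)" using fX by (simp add: finite_PiE)
  ultimately show ?thesis by (meson finite_imageI finite_subset)
qed

theorem lemma4:
  fixes F :: "'f set" and s :: "'f fsys"
    and G :: "'o set" and t :: "'o fsys" and c :: "'o set \<Rightarrow> nat"
    and outer v0 v1 v2 :: "'o set"
  assumes "polyhedral F s"
    and "c3_lsp_operation G t c outer v0 v1 v2"
  defines "Y \<equiv> op_chambers G t outer"
    and "s' \<equiv> op_sys s G t c outer v0 v1 v2"
  shows "(card (aut (F \<times> Y) s') > card (aut F s)
            \<longleftrightarrow> (\<exists>\<phi>\<in>aut (F \<times> Y) s'. \<exists>x\<in>F \<times> Y. snd (\<phi> x) \<noteq> snd x))
       \<and> ((\<exists>\<phi>\<in>aut (F \<times> Y) s'. \<exists>x\<in>F \<times> Y. snd (\<phi> x) \<noteq> snd x)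
            \<longleftrightarrow> (\<exists>\<phi>\<in>aut (F \<times> Y) s'. \<forall>x\<in>F \<times> Y. snd (\<phi> x) \<noteq> snd x))"
proof -
  let ?N = "NN G t c" and ?K = "KK G t c outer v0 v1 v2" and ?nx = "nxt G t c outer"
  let ?R = "Rel G t c outer"
  define X where "X = F \<times> Y"
  note OP = O_props[OF assms(2), folded Y_def]
  have Yne: "Y \<noteq> {}" by (rule OP(1))
  have NY: "\<And>y i. y \<in> Y \<Longrightarrow> i < 3 \<Longrightarrow> ?N i y \<noteq> outer \<Longrightarrow> ?N i y \<in> Y" by (rule OP(2))
  have KY: "\<And>y i. y \<in> Y \<Longrightarrow> i < 3 \<Longrightarrow> ?N i y = outer \<Longrightarrow> ?K i y < 3" by (rule OP(3))
  have Yconn: "\<And>y y'. y \<in> Y \<Longrightarrow> y' \<in> Y \<Longrightarrow> (y,y') \<in> ?R\<^sup>*" by (rule OP(4))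
  have lab: "\<And>k. k < 3 \<Longrightarrow> \<exists>y\<in>Y. \<exists>i<3. ?N i y = outer \<and> ?K i y = k" by (rule OP(5))
  have RelE: "y \<in> Y \<and> (\<exists>i<3. y' = ?nx i y)" if "(y,y') \<in> ?R" for y y'
    using that unfolding Rel_def Y_def by blast
  have Fmap: "is_map F s" using assms(1) unfolding polyhedral_def by blast
  have sF: "\<And>i x. i < 3 \<Longrightarrow> x \<in> F \<Longrightarrow> s i x \<in> F" using Fmap unfolding is_map_def by blast
  have Fconn: "\<And>x y. x \<in> F \<Longrightarrow> y \<in> F \<Longrightarrow> (x,y) \<in> (step F s {0,1,2})\<^sup>*"
    using Fmap unfolding is_map_def by blast
  have Ffin: "finite F" and Fne: "F \<noteq> {}" using Fmap unfolding is_map_def by blast+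
  have Gfin: "finite G" using assms(2) unfolding c3_lsp_operation_def lsp_operation_def plane_map_def is_map_def
    by blast
  have Yfin: "finite Y" unfolding Y_def op_chambers_def faces_def using Gfin by simp
  have Xfin: "finite X" unfolding X_def using Ffin Yfin by simp
  have Xne: "X \<noteq> {}" unfolding X_def using Fne Yne by simp
  have s'eq: "\<And>i f y. s' i (f,y) = (if ?N i y \<noteq> outer then (f, ?N i y) else (s (?K i y) f, y))"
    unfolding s'_def by (rule op_sys_eq)
  have snd': "\<And>i x. snd (s' i x) = ?nx i (snd x)" unfolding s'_def by (rule snd_op_sys)
  have cl: "s' i x \<in> X" if h: "i < 3" "x \<in> X" for i x
  proof -
    obtain f y where x: "x = (f,y)" "f \<in> F" "y \<in> Y" using h(2) unfolding X_def by blast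
    show ?thesis
    proof (cases "?N i y \<noteq> outer")
      case True then show ?thesis using NY[OF x(3) h(1)] x s'eq unfolding X_def by simp
    next
      case False then show ?thesis using KY[OF x(3) h(1)] sF x s'eq unfolding X_def by simp
    qed
  qed
  have autE: "bij_betw \<phi> A A" "\<And>x. x \<notin> A \<Longrightarrow> \<phi> x = x" "\<And>i x. i < 3 \<Longrightarrow> x \<in> A \<Longrightarrow> \<phi> (ss i x) = ss i (\<phi> x)"
    if "\<phi> \<in> aut A ss" for \<phi> A ss
    using that unfolding aut_def by blast+
  have autfX: "finite (aut X s')" using aut_finite[OF Xfin] .
  have autfF: "finite (aut F s)" using aut_finite[OF Ffin] .
  define Cl where "Cl = {\<phi> \<in> aut X s'. \<forall>x\<in>X. snd (\<phi> x) = snd x}"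
  define L where "L = (\<lambda>\<psi> :: 'f \<Rightarrow> 'f. \<lambda>x. if x \<in> X then (\<psi> (fst x), snd x) else x)"
  obtain y0 where y0: "y0 \<in> Y" using Yne by blast
  have L_aut: "L \<psi> \<in> aut X s'" if p: "\<psi> \<in> aut F s" for \<psi>
  proof -
    note pb = autE[OF p]
    have inj: "inj_on (L \<psi>) X"
    proof (rule inj_onI)
      fix x z assume "x \<in> X" "z \<in> X" "L \<psi> x = L \<psi> z"
      then show "x = z" using bij_betw_imp_inj_on[OF pb(1)] unfolding L_def X_def
        by (auto simp: inj_on_def prod_eq_iff)
    qed
    have img: "L \<psi> ` X = X"
    proof
      show "L \<psi> ` X \<subseteq> X" using bij_betw_apply[OF pb(1)] unfolding L_def X_def by auto
      show "X \<subseteq> L \<psi> ` X"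
      proof
        fix x assume x: "x \<in> X"
        obtain g y where gy: "x = (g,y)" "g \<in> F" "y \<in> Y" using x unfolding X_def by blast
        obtain f where f: "f \<in> F" "g = \<psi> f" using gy(2) bij_betw_imp_surj_on[OF pb(1)] by blast
        have "L \<psi> (f,y) = x" using f gy unfolding L_def X_def by simp
        moreover have "(f,y) \<in> X" using f gy unfolding X_def by simp
        ultimately show "x \<in> L \<psi> ` X" by (metis imageI)
      qed
    qed
    have comm: "L \<psi> (s' i x) = s' i (L \<psi> x)" if h: "i < 3" "x \<in> X" for i x
    proof -
      obtain f y where x: "x = (f,y)" "f \<in> F" "y \<in> Y" using h(2) unfolding X_def by blast
      have Lx: "L \<psi> x = (\<psi> f, y)" using h(2) x unfolding L_def by simp
      have Ls: "L \<psi> (s' i x) = (\<psi> (fst (s' i x)), snd (s' i x))" using cl[OF h] unfolding L_def by simp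
      show ?thesis
      proof (cases "?N i y \<noteq> outer")
        case True then show ?thesis using Lx Ls x s'eq by simp
      next
        case False
        have "\<psi> (s (?K i y) f) = s (?K i y) (\<psi> f)" using pb(3)[OF KY[OF x(3) h(1)] x(2)] False by simp
        then show ?thesis using Lx Ls x s'eq False by simp
      qed
    qed
    have out: "L \<psi> x = x" if "x \<notin> X" for x using that unfolding L_def by simp
    show ?thesis unfolding aut_def using inj img comm out by (auto simp: bij_betw_def)
  qed
  have L_Cl: "L \<psi> \<in> Cl" if "\<psi> \<in> aut F s" for \<psi>
    using L_aut[OF that] unfolding Cl_def L_def by auto
  have L_inj: "inj_on L (aut F s)"
  proof (rule inj_onI)
    fix \<psi>1 \<psi>2 assume p1: "\<psi>1 \<in> aut F s" and p2: "\<psi>2 \<in> aut F s" and eq: "L \<psi>1 = L \<psi>2"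
    show "\<psi>1 = \<psi>2"
    proof
      fix f
      show "\<psi>1 f = \<psi>2 f"
      proof (cases "f \<in> F")
        case True
        then have "(f,y0) \<in> X" using y0 unfolding X_def by simp
        then have "L \<psi>1 (f,y0) = (\<psi>1 f, y0)" "L \<psi>2 (f,y0) = (\<psi>2 f, y0)" unfolding L_def by simp_all
        then show ?thesis using eq by simp
      next
        case False then show ?thesis using autE(2)[OF p1] autE(2)[OF p2] by simp
      qed
    qed
  qed
  have I21: "card (aut X s') > card (aut F s)" if h: "\<exists>\<phi>\<in>aut X s'. \<exists>x\<in>X. snd (\<phi> x) \<noteq> snd x"
  proof -
    obtain \<phi> x where p: "\<phi> \<in> aut X s'" "x \<in> X" "snd (\<phi> x) \<noteq> snd x" using h by blast
    have "L ` aut F s \<subseteq> Cl" using L_Cl by blast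
    moreover have "Cl \<subseteq> aut X s'" unfolding Cl_def by blast
    moreover have "\<phi> \<notin> Cl" using p unfolding Cl_def by blast
    ultimately have "L ` aut F s \<subset> aut X s'" using p(1) by blast
    then have "card (L ` aut F s) < card (aut X s')" using autfX by (rule psubset_card_mono[rotated])
    then show ?thesis using card_image[OF L_inj] by simp
  qed
  have Aeq: "\<phi> (f,y) = (fst (\<phi> (f,y0)), y)" if p: "\<phi> \<in> Cl" and f: "f \<in> F" and y: "y \<in> Y" for \<phi> f y
  proof -
    have pa: "\<phi> \<in> aut X s'" and pc: "\<forall>x\<in>X. snd (\<phi> x) = snd x" using p unfolding Cl_def by blast+
    have "(y0,y) \<in> ?R\<^sup>*" using Yconn[OF y0 y] .
    then show ?thesis
    proof (induction rule: rtrancl_induct)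
      case base
      have "(f,y0) \<in> X" using f y0 unfolding X_def by simp
      then have "snd (\<phi> (f,y0)) = y0" using pc by force
      then show ?case by (metis prod.collapse)
    next
      case (step y1 y2)
      obtain i where i: "i < 3" "y2 = ?nx i y1" and y1: "y1 \<in> Y" using RelE[OF step(2)] by blast
      show ?case
      proof (cases "?N i y1 \<noteq> outer")
        case False then show ?thesis using i step(3) unfolding nxt_def by simp
      next
        case True
        have x1: "(f,y1) \<in> X" using f y1 unfolding X_def by simp
        have "\<phi> (f,y2) = \<phi> (s' i (f,y1))" using True i s'eq unfolding nxt_def by simp
        also have "\<dots> = s' i (\<phi> (f,y1))" using autE(3)[OF pa i(1) x1] .
        also have "\<dots> = (fst (\<phi> (f,y0)), y2)" using step(3) True i s'eq unfolding nxt_def by simp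
        finally show ?thesis .
      qed
    qed
  qed
  define Rm where "Rm = (\<lambda>\<phi> :: ('f \<times> 'o set) \<Rightarrow> ('f \<times> 'o set). \<lambda>f. if f \<in> F then fst (\<phi> (f,y0)) else f)"
  have Rm_aut: "Rm \<phi> \<in> aut F s" if p: "\<phi> \<in> Cl" for \<phi>
  proof -
    have pa: "\<phi> \<in> aut X s'" using p unfolding Cl_def by blast
    note pb = autE[OF pa]
    have A: "\<phi> (f,y) = (Rm \<phi> f, y)" if "f \<in> F" "y \<in> Y" for f y
      using Aeq[OF p that] that unfolding Rm_def by simp
    have inF: "Rm \<phi> f \<in> F" if f: "f \<in> F" for f
    proof -
      have "(f,y0) \<in> X" using f y0 unfolding X_def by simp
      then have "\<phi> (f,y0) \<in> X" using bij_betw_apply[OF pb(1)] by blast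
      then show ?thesis using A[OF f y0] unfolding X_def by simp
    qed
    have inj: "inj_on (Rm \<phi>) F"
    proof (rule inj_onI)
      fix f g assume f: "f \<in> F" and g: "g \<in> F" and eq: "Rm \<phi> f = Rm \<phi> g"
      have "\<phi> (f,y0) = \<phi> (g,y0)" using A[OF f y0] A[OF g y0] eq by simp
      moreover have "(f,y0) \<in> X" "(g,y0) \<in> X" using f g y0 unfolding X_def by simp_all
      ultimately show "f = g" using bij_betw_imp_inj_on[OF pb(1)] by (auto dest: inj_onD)
    qed
    have surj: "F \<subseteq> Rm \<phi> ` F"
    proof
      fix g assume g: "g \<in> F"
      have "(g,y0) \<in> X" using g y0 unfolding X_def by simp
      then obtain x where x: "x \<in> X" "\<phi> x = (g,y0)" using bij_betw_imp_surj_on[OF pb(1)] by (metis imageE)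
      obtain f y where fy: "x = (f,y)" "f \<in> F" "y \<in> Y" using x(1) unfolding X_def by blast
      have "(Rm \<phi> f, y) = (g, y0)" using A[OF fy(2,3)] x(2) fy(1) by simp
      then show "g \<in> Rm \<phi> ` F" using fy(2) by auto
    qed
    have bij: "bij_betw (Rm \<phi>) F F" unfolding bij_betw_def using inj inF surj by blast
    have out: "Rm \<phi> f = f" if "f \<notin> F" for f using that unfolding Rm_def by simp
    have comm: "Rm \<phi> (s k f) = s k (Rm \<phi> f)" if k: "k < 3" and f: "f \<in> F" for k f
    proof -
      obtain y1 i where y1: "y1 \<in> Y" "i < 3" "?N i y1 = outer" "?K i y1 = k" using lab[OF k] by blast
      have x1: "(f,y1) \<in> X" using f y1 unfolding X_def by simp
      have skf: "s k f \<in> F" using sF[OF k f] .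
      have "(Rm \<phi> (s k f), y1) = \<phi> (s k f, y1)" using A[OF skf y1(1)] by simp
      also have "\<dots> = \<phi> (s' i (f,y1))" using s'eq y1 by simp
      also have "\<dots> = s' i (\<phi> (f,y1))" using pb(3)[OF y1(2) x1] .
      also have "\<dots> = (s k (Rm \<phi> f), y1)" using A[OF f y1(1)] s'eq y1 by simp
      finally show ?thesis by simp
    qed
    show ?thesis unfolding aut_def using bij out comm by blast
  qed
  have Rm_inj: "inj_on Rm Cl"
  proof (rule inj_onI)
    fix \<phi>1 \<phi>2 assume p1: "\<phi>1 \<in> Cl" and p2: "\<phi>2 \<in> Cl" and eq: "Rm \<phi>1 = Rm \<phi>2"
    have pa1: "\<phi>1 \<in> aut X s'" and pa2: "\<phi>2 \<in> aut X s'" using p1 p2 unfolding Cl_def by blast+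
    show "\<phi>1 = \<phi>2"
    proof
      fix x
      show "\<phi>1 x = \<phi>2 x"
      proof (cases "x \<in> X")
        case True
        then obtain f y where fy: "x = (f,y)" "f \<in> F" "y \<in> Y" unfolding X_def by blast
        have "\<phi>1 (f,y) = (Rm \<phi>1 f, y)" using Aeq[OF p1 fy(2,3)] fy unfolding Rm_def by simp
        moreover have "\<phi>2 (f,y) = (Rm \<phi>2 f, y)" using Aeq[OF p2 fy(2,3)] fy unfolding Rm_def by simp
        ultimately show ?thesis using eq fy(1) by simp
      next
        case False then show ?thesis using autE(2)[OF pa1] autE(2)[OF pa2] by simp
      qed
    qed
  qed
  have I12: "\<exists>\<phi>\<in>aut X s'. \<exists>x\<in>X. snd (\<phi> x) \<noteq> snd x" if h: "card (aut X s') > card (aut F s)"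
  proof (rule ccontr)
    assume "\<not> (\<exists>\<phi>\<in>aut X s'. \<exists>x\<in>X. snd (\<phi> x) \<noteq> snd x)"
    then have "aut X s' = Cl" unfolding Cl_def by blast
    moreover have "card Cl \<le> card (aut F s)"
      using card_inj_on_le[OF Rm_inj _ autfF] Rm_aut by blast
    ultimately show False using h by simp
  qed
  have I23: "\<exists>\<phi>\<in>aut X s'. \<forall>x\<in>X. snd (\<phi> x) \<noteq> snd x" if h: "\<exists>\<phi>\<in>aut X s'. \<exists>x\<in>X. snd (\<phi> x) \<noteq> snd x"
  proof -
    obtain \<phi> x0 where p: "\<phi> \<in> aut X s'" "x0 \<in> X" "snd (\<phi> x0) \<noteq> snd x0" using h by blast
    note pb = autE[OF p(1)]
    define S where "S = {x \<in> X. snd (\<phi> x) = snd x}"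
    have Scl: "s' i x \<in> S" if hs: "x \<in> S" "i < 3" for x i
    proof -
      have x: "x \<in> X" "snd (\<phi> x) = snd x" using hs(1) unfolding S_def by blast+
      have "snd (\<phi> (s' i x)) = snd (s' i (\<phi> x))" using pb(3)[OF hs(2) x(1)] by simp
      also have "\<dots> = snd (s' i x)" using snd' x(2) by simp
      finally show ?thesis using cl[OF hs(2) x(1)] unfolding S_def by blast
    qed
    have spread: "(f,y') \<in> S" if "(f,y) \<in> S" "(y,y') \<in> ?R\<^sup>*" for f y y'
      using that(2)
    proof (induction rule: rtrancl_induct)
      case base then show ?case using that(1) .
    next
      case (step y1 y2)
      obtain i where i: "i < 3" "y2 = ?nx i y1" using RelE[OF step(2)] by blast
      show ?case
      proof (cases "?N i y1 \<noteq> outer")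
        case False then show ?thesis using i step(3) unfolding nxt_def by simp
      next
        case True
        have "s' i (f,y1) = (f,y2)" using True i s'eq unfolding nxt_def by simp
        then show ?thesis using Scl[OF step(3) i(1)] by simp
      qed
    qed
    show ?thesis
    proof (rule bexI[OF _ p(1)], rule ballI, rule ccontr)
      fix x1 assume x1: "x1 \<in> X" "\<not> snd (\<phi> x1) \<noteq> snd x1"
      obtain f1 y1 where f1: "x1 = (f1,y1)" "f1 \<in> F" "y1 \<in> Y" using x1(1) unfolding X_def by blast
      have x1S: "(f1,y1) \<in> S" using x1 f1(1) unfolding S_def by simp
      define Fs where "Fs = {f \<in> F. \<forall>y\<in>Y. (f,y) \<in> S}"
      have f1Fs: "f1 \<in> Fs" unfolding Fs_def using f1 spread[OF x1S Yconn[OF f1(3)]] by blast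
      have Fscl: "s k f \<in> Fs" if hf: "f \<in> Fs" "k < 3" for f k
      proof -
        obtain y2 i where y2: "y2 \<in> Y" "i < 3" "?N i y2 = outer" "?K i y2 = k" using lab[OF hf(2)] by blast
        have fS: "(f,y2) \<in> S" and fF: "f \<in> F" using hf(1) y2(1) unfolding Fs_def by blast+
        have "s' i (f,y2) = (s k f, y2)" using s'eq y2 by simp
        then have "(s k f, y2) \<in> S" using Scl[OF fS y2(2)] by simp
        then show ?thesis unfolding Fs_def using spread Yconn[OF y2(1)] sF[OF hf(2) fF] by blast
      qed
      have allF: "f \<in> Fs" if "f \<in> F" for f
      proof -
        have "(f1,f) \<in> (step F s {0,1,2})\<^sup>*" using Fconn[OF f1(2) that] .
        then show ?thesis
        proof (induction rule: rtrancl_induct)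
          case base then show ?case using f1Fs .
        next
          case (step g h)
          from stepE[OF step(2)] obtain k where k: "k \<in> {0,1,2}" "h = s k g" by blast
          have "k < 3" using k(1) by auto
          then show ?case using Fscl[OF step(3)] k(2) by simp
        qed
      qed
      obtain f0 y0' where x0: "x0 = (f0,y0')" "f0 \<in> F" "y0' \<in> Y" using p(2) unfolding X_def by blast
      have "x0 \<in> S" using allF[OF x0(2)] x0 unfolding Fs_def by blast
      then show False using p(3) unfolding S_def by blast
    qed
  qed
  have I32: "\<exists>\<phi>\<in>aut X s'. \<exists>x\<in>X. snd (\<phi> x) \<noteq> snd x" if h: "\<exists>\<phi>\<in>aut X s'. \<forall>x\<in>X. snd (\<phi> x) \<noteq> snd x"
    using h Xne by blast
  show ?thesis unfolding X_def[symmetric] using I12 I21 I23 I32 by blast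
qed

end
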